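(* Let $n\ge 1$ and let $a_1,\dots,a_n\ge 2$ be integers. Let $\mathbb{E}=(a_i\delta_{i,j}+\delta_{i+1,j})_{i,j=1}^n$ (the upper bidiagonal $n\times n$ matrix with diagonal $a_1,\dots,a_n$ and all superdiagonal entries $1$). For $\mathbf{k}=(k_1,\dots,k_n)\in\mathbb{Z}^n$ define rational numbers $\omega^{(n)}_{\mathbf{k},1},\dots,\omega^{(n)}_{\mathbf{k},n}$ by $$(\omega^{(n)}_{\mathbf{k},1},\dots,\omega^{(n)}_{\mathbf{k},n}):=(k_1+1,\dots,k_n+1)\,\mathbb{E}^{-T},$$ where $\mathbb{E}^{-T}=(\mathbb{E}^{-1})^T$. Then for every $\mathbf{k}$ with $0\le k_i\le a_i-1$ for $i=1,\dots,n-1$ and $0\le k_n\le a_n-2$, one has $0<\omega^{(n)}_{\mathbf{k},i}<1$ for all $i=1,\dots,n$. Moreover, setting $\mathbf{k}^\ast:=(a_1-1,\dots,a_{n-1}-1,a_n-2)-\mathbf{k}$, one has $$\omega^{(n)}_{\mathbf{k}^\ast,i}=1-\omega^{(n)}_{\mathbf{k},i},\qquad i=1,\dots,n.$$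
   Context: $\mathbb{E}$ is the exponent matrix of the chain-type polynomial $f_n=z_1^{a_1}z_2+z_2^{a_2}z_3+\cdots+z_{n-1}^{a_{n-1}}z_n+z_n^{a_n}$. *)

theory Defs
  imports "Jordan_Normal_Form.Matrix"
begin

definition inv_mat :: "'a::field mat \<Rightarrow> 'a mat" where
  "inv_mat A = (SOME B. B \<in> carrier_mat (dim_row A) (dim_row A) \<and>
      A * B = 1\<^sub>m (dim_row A) \<and> B * A = 1\<^sub>m (dim_row A))"

text \<open>Exponent matrix E = (a_i delta_{i,j} + delta_{i+1,j}), i,j = 1..n.
  Mathematical indices 1..n correspond to JNF indices 0..n-1; the sequence a is
  indexed from 1, i.e. a 1, ..., a n.\<close>
definition exp_mat :: "nat \<Rightarrow> (nat \<Rightarrow> int) \<Rightarrow> rat mat" where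
  "exp_mat n a = mat n n (\<lambda>(i, j).
      (if i = j then rat_of_int (a (i + 1)) else 0) + (if j = i + 1 then 1 else 0))"

definition omega :: "nat \<Rightarrow> (nat \<Rightarrow> int) \<Rightarrow> (nat \<Rightarrow> int) \<Rightarrow> nat \<Rightarrow> rat" where
  "omega n a k i =
     (mat 1 n (\<lambda>(_, j). rat_of_int (k (j + 1) + 1)) * transpose_mat (inv_mat (exp_mat n a))) $$ (0, i - 1)"

end

theory Submission imports Defs "Jordan_Normal_Form.Determinant" begin

lemma omega_eq:
  fixes n :: nat and a k :: "nat \<Rightarrow> int" and w :: "nat \<Rightarrow> rat"
  assumes n: "n \<ge> 1" and a: "\<forall>i\<in>{1..n}. a i \<ge> 2"
    and w1: "\<forall>j. j + 1 < n \<longrightarrow> rat_of_int (a (j+1)) * w j + w (j+1) = rat_of_int (k (j+1)) + 1"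
    and w2: "rat_of_int (a n) * w (n-1) = rat_of_int (k n) + 1"
  shows "\<forall>i\<in>{1..n}. omega n a k i = w (i-1)"
proof -
  let ?E = "exp_mat n a"
  have Ec: "?E \<in> carrier_mat n n" unfolding exp_mat_def by simp
  have ut: "upper_triangular ?E" unfolding upper_triangular_def exp_mat_def by auto
  have dg: "diag_mat ?E = map (\<lambda>i. rat_of_int (a (i+1))) [0..<n]"
    unfolding diag_mat_def exp_mat_def by (rule map_cong) auto
  have "\<forall>i<n. a (i+1) \<noteq> 0"
  proof (intro allI impI)
    fix i assume "i < n" then have "i+1 \<in> {1..n}" by simp
    then show "a (i+1) \<noteq> 0" using a by fastforce
  qed
  then have "prod_list (diag_mat ?E) \<noteq> 0" unfolding dg prod_list_zero_iff by auto
  then have "det ?E \<noteq> 0" using det_upper_triangular[OF ut Ec] by simp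
  from det_non_zero_imp_unit[OF Ec this, of "()"]
  obtain B where B: "B \<in> carrier_mat n n" "B * ?E = 1\<^sub>m n" "?E * B = 1\<^sub>m n"
    unfolding Units_def ring_mat_def by auto
  let ?P = "\<lambda>B. B \<in> carrier_mat (dim_row ?E) (dim_row ?E) \<and>
      ?E * B = 1\<^sub>m (dim_row ?E) \<and> B * ?E = 1\<^sub>m (dim_row ?E)"
  have "?P B" using B Ec by simp
  then have "?P (inv_mat ?E)" unfolding inv_mat_def by (rule someI)
  then have Bi: "inv_mat ?E \<in> carrier_mat n n" "inv_mat ?E * ?E = 1\<^sub>m n" using Ec by auto
  define V where "V = mat 1 n (\<lambda>(_, j). rat_of_int (k (j + 1) + 1))"
  define R where "R = mat 1 n (\<lambda>(_, j). w j)"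
  have RE: "R * transpose_mat ?E = V"
  proof (rule eq_matI)
    fix i j assume i: "i < dim_row V" and j: "j < dim_col V"
    then have i0: "i = 0" and jn: "j < n" unfolding V_def by auto
    have "(R * transpose_mat ?E) $$ (i, j) = (\<Sum>l<n. w l * ((if j = l then rat_of_int (a (j+1)) else 0) + (if l = j+1 then 1 else 0)))"
      using i0 jn unfolding R_def exp_mat_def by (simp add: scalar_prod_def lessThan_atLeast0 row_def col_def)
    also have "\<dots> = rat_of_int (a (j+1)) * w j + (if j + 1 < n then w (j+1) else 0)"
    proof -
      have "(\<Sum>l<n. w l * ((if j = l then rat_of_int (a (j+1)) else 0) + (if l = j+1 then 1 else 0)))
        = (\<Sum>l<n. (if l = j then rat_of_int (a (j+1)) * w j else 0)) + (\<Sum>l<n. (if l = j+1 then w (j+1) else 0))"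
        unfolding sum.distrib[symmetric] by (rule sum.cong) auto
      also have "\<dots> = rat_of_int (a (j+1)) * w j + (if j + 1 < n then w (j+1) else 0)"
        using jn by (simp only: sum.delta finite_lessThan lessThan_iff) simp
      finally show ?thesis .
    qed
    also have "\<dots> = V $$ (i, j)"
    proof (cases "j + 1 < n")
      case True then show ?thesis using w1 i0 jn unfolding V_def by simp
    next
      case False then have "j = n - 1" using jn by simp
      then show ?thesis using w2 i0 jn n unfolding V_def by simp
    qed
    finally show "(R * transpose_mat ?E) $$ (i, j) = V $$ (i, j)" .
  qed (auto simp: R_def V_def exp_mat_def)
  have "V * transpose_mat (inv_mat ?E) = R * transpose_mat ?E * transpose_mat (inv_mat ?E)"
    using RE by simp
  also have "\<dots> = R * (transpose_mat ?E * transpose_mat (inv_mat ?E))"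
    using Ec Bi by (intro assoc_mult_mat[of _ 1 n _ n _ n]) (auto simp: R_def)
  also have "transpose_mat ?E * transpose_mat (inv_mat ?E) = transpose_mat (inv_mat ?E * ?E)"
    using transpose_mult[OF Bi(1) Ec] by simp
  also have "\<dots> = 1\<^sub>m n" using Bi by simp
  also have "R * 1\<^sub>m n = R" by (simp add: R_def)
  finally have "V * transpose_mat (inv_mat ?E) = R" .
  then show ?thesis unfolding omega_def V_def[symmetric] by (auto simp: R_def)
qed

fun wseq :: "nat \<Rightarrow> (nat \<Rightarrow> int) \<Rightarrow> (nat \<Rightarrow> int) \<Rightarrow> nat \<Rightarrow> rat" where
  "wseq n a k 0 = (rat_of_int (k n) + 1) / rat_of_int (a n)"
| "wseq n a k (Suc m) = (rat_of_int (k (n - Suc m)) + 1 - wseq n a k m) / rat_of_int (a (n - Suc m))"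

theorem proposition2p12:
  fixes n :: nat and a k :: "nat \<Rightarrow> int"
  assumes "n \<ge> 1"
    and "\<forall>i\<in>{1..n}. a i \<ge> 2"
    and "\<forall>i\<in>{1..n-1}. 0 \<le> k i \<and> k i \<le> a i - 1"
    and "0 \<le> k n" and "k n \<le> a n - 2"
  shows "(\<forall>i\<in>{1..n}. 0 < omega n a k i \<and> omega n a k i < 1) \<and>
         (\<forall>i\<in>{1..n}. omega n a
             (\<lambda>j. (if j = n then a n - 2 else a j - 1) - k j) i = 1 - omega n a k i)"
proof -
  note n = assms(1) and a = assms(2) and kb = assms(3)
  define w where "w j = wseq n a k (n - 1 - j)" for j
  have an: "rat_of_int (a n) \<ge> 2" using a n by force
  have bnd: "m < n \<Longrightarrow> 0 < wseq n a k m \<and> wseq n a k m < 1" for m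
  proof (induction m)
    case 0
    have "rat_of_int (k n) + 1 > 0" "rat_of_int (k n) + 1 < rat_of_int (a n)"
      using assms(4,5) by linarith+
    then show ?case using an by (simp add: divide_less_eq)
  next
    case (Suc m)
    define i where "i = n - Suc m"
    have i: "i \<in> {1..n-1}" using Suc.prems unfolding i_def by auto
    have ai: "rat_of_int (a i) \<ge> 2" using a i by force
    have ki: "0 \<le> rat_of_int (k i)" "rat_of_int (k i) \<le> rat_of_int (a i) - 1" using kb i by force+
    have g: "0 < wseq n a k m" "wseq n a k m < 1" using Suc by auto
    have "rat_of_int (k i) + 1 - wseq n a k m > 0" "rat_of_int (k i) + 1 - wseq n a k m < rat_of_int (a i)"
      using ki g by linarith+
    then show ?case using ai by (simp add: i_def[symmetric] divide_less_eq)
  qed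
  have w1: "\<forall>j. j + 1 < n \<longrightarrow> rat_of_int (a (j+1)) * w j + w (j+1) = rat_of_int (k (j+1)) + 1"
  proof (intro allI impI)
    fix j assume j: "j + 1 < n"
    have e: "n - 1 - j = Suc (n - 1 - (j+1))" "n - Suc (n - 1 - (j+1)) = j + 1" using j by auto
    have "j + 1 \<in> {1..n}" using j by simp
    then have "a (j+1) \<ge> 2" using a by blast
    then have "rat_of_int (a (j+1)) \<noteq> 0" by simp
    then show "rat_of_int (a (j+1)) * w j + w (j+1) = rat_of_int (k (j+1)) + 1"
      unfolding w_def e(1) wseq.simps e(2) by simp
  qed
  have w2: "rat_of_int (a n) * w (n-1) = rat_of_int (k n) + 1"
    using an unfolding w_def by simp
  have om: "\<forall>i\<in>{1..n}. omega n a k i = w (i-1)" by (rule omega_eq[OF n a w1 w2])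
  define ks where "ks = (\<lambda>j. (if j = n then a n - 2 else a j - 1) - k j)"
  have w1': "\<forall>j. j + 1 < n \<longrightarrow> rat_of_int (a (j+1)) * (1 - w j) + (1 - w (j+1)) = rat_of_int (ks (j+1)) + 1"
  proof (intro allI impI)
    fix j assume j: "j + 1 < n"
    then show "rat_of_int (a (j+1)) * (1 - w j) + (1 - w (j+1)) = rat_of_int (ks (j+1)) + 1"
      using w1 unfolding ks_def by (auto simp: algebra_simps)
  qed
  have w2': "rat_of_int (a n) * (1 - w (n-1)) = rat_of_int (ks n) + 1"
    using w2 unfolding ks_def by (auto simp: algebra_simps)
  have om': "\<forall>i\<in>{1..n}. omega n a ks i = 1 - w (i-1)" by (rule omega_eq[OF n a w1' w2'])
  have wb: "i \<in> {1..n} \<Longrightarrow> 0 < w (i-1) \<and> w (i-1) < 1" for i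
    unfolding w_def using bnd[of "n - 1 - (i - 1)"] by auto
  show ?thesis using om om' wb unfolding ks_def[symmetric] by auto
qed
end
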